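(* Let $M$ be the monoid (algebra in sets) generated by $a,b,c,d,e,f,g,h,i,j,k,l$ subject to the relations $da=eb$, $fb=hc$, $gb=ic$, $kh=li$ and $je=kf=lg$. Then $M$ is basic-set, i.e. for all $u,v,x\in M$, $ux=vx$ implies $u=v$.
   Context: For an associative algebra viewed as an operad concentrated in arity $1$, the basic-set condition (injectivity of $\nu\mapsto\gamma(\nu;\nu_1)$) is right cancellativity of the underlying monoid. *)

theory Defs
  imports Main
begin

datatype gen = a | b | c | d | e | f | g | h | i | j | k | l

definition rels :: "(gen list \<times> gen list) set" where
  "rels = {([d,a],[e,b]), ([f,b],[h,c]), ([g,b],[i,c]), ([k,h],[l,i]),
           ([j,e],[k,f]), ([k,f],[l,g])}"

text \<open>The monoid congruence on the free monoid generated by the relations.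
  The monoid M is the quotient of words by this congruence.\<close>
inductive meq :: "gen list \<Rightarrow> gen list \<Rightarrow> bool" where
  rel: "(u, v) \<in> rels \<Longrightarrow> meq (p @ u @ q) (p @ v @ q)"
| refl: "meq w w"
| sym: "meq u v \<Longrightarrow> meq v u"
| trans: "meq u v \<Longrightarrow> meq v w \<Longrightarrow> meq u w"

end

theory Submission
  imports Defs
begin

fun insb where "insb (e#P) = a#d#P" | "insb N = b#N"
fun insc where
  "insc (h#k#P) = a#d#j#P" | "insc (h#P) = b#f#P"
| "insc (i#l#P) = a#d#j#P" | "insc (i#P) = b#g#P" | "insc N = c#N"
fun insi where "insi (l#P) = h#k#P" | "insi N = i#N"
fun insf where "insf (k#P) = e#j#P" | "insf N = f#N"
fun insg where "insg (l#P) = e#j#P" | "insg N = g#N"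

definition insr :: "gen \<Rightarrow> gen list \<Rightarrow> gen list" where
  "insr y N = (case y of b \<Rightarrow> insb N | c \<Rightarrow> insc N | i \<Rightarrow> insi N
      | f \<Rightarrow> insf N | g \<Rightarrow> insg N | _ \<Rightarrow> y#N)"

definition unb where "unb R = (if take 2 R = [a,d] then e#drop 2 R else tl R)"
definition unc where
  "unc R = (if take 3 R = [a,d,j] then h#k#drop 3 R else if take 2 R = [b,f] then h#drop 2 R
    else if take 2 R = [b,g] then i#drop 2 R else tl R)"
definition uni where "uni R = (if take 2 R = [h,k] then l#drop 2 R else tl R)"
definition unf where "unf R = (if take 2 R = [e,j] then k#drop 2 R else tl R)"
definition ung where "ung R = (if take 2 R = [e,j] then l#drop 2 R else tl R)"

definition uninsr :: "gen \<Rightarrow> gen list \<Rightarrow> gen list" where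
  "uninsr y R = (case y of b \<Rightarrow> unb R | c \<Rightarrow> unc R | i \<Rightarrow> uni R
      | f \<Rightarrow> unf R | g \<Rightarrow> ung R | _ \<Rightarrow> tl R)"

fun nfr :: "gen list \<Rightarrow> gen list" where
  "nfr [] = []"
| "nfr (y#w) = insr y (nfr w)"

lemma meq_cong: "meq u v \<Longrightarrow> meq (p@u@q) (p@v@q)"
proof (induction arbitrary: p q rule: meq.induct)
  case (rel u v p' q')
  then show ?case using meq.rel[of u v "p@p'" "q'@q"] by simp
next
  case (refl w) then show ?case by (rule meq.refl)
next
  case (sym u v) then show ?case by (blast intro: meq.sym)
next
  case (trans u v w) then show ?case by (blast intro: meq.trans)
qed

lemma relstep: "([x1,x2],[y1,y2]) \<in> rels \<Longrightarrow> meq (P@[x1,x2]@Q) (P@[y1,y2]@Q)"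
  using meq.rel by blast

lemma relstep': "([y1,y2],[x1,x2]) \<in> rels \<Longrightarrow> meq (P@[x1,x2]@Q) (P@[y1,y2]@Q)"
  using meq.rel meq.sym by blast

lemma m1: "meq (rev P @ [e,b]) (rev P @ [d,a])"
  using relstep'[of d a e b "rev P" "[]"] by (simp add: rels_def)
lemma m2: "meq (rev P @ [k,h,c]) (rev P @ [j,d,a])"
proof -
  have s1: "meq (rev P @ [k,h,c]) (rev P @ [k,f,b])"
    using relstep'[of f b h c "rev P @ [k]" "[]"] by (simp add: rels_def)
  have s2: "meq (rev P @ [k,f,b]) (rev P @ [j,e,b])"
    using relstep'[of j e k f "rev P" "[b]"] by (simp add: rels_def)
  have s3: "meq (rev P @ [j,e,b]) (rev P @ [j,d,a])"
    using relstep'[of d a e b "rev P @ [j]" "[]"] by (simp add: rels_def)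
  show ?thesis using s1 s2 s3 meq.trans by blast
qed
lemma m3: "meq (rev P @ [h,c]) (rev P @ [f,b])"
  using relstep'[of f b h c "rev P" "[]"] by (simp add: rels_def)
lemma m4: "meq (rev P @ [i,c]) (rev P @ [g,b])"
  using relstep'[of g b i c "rev P" "[]"] by (simp add: rels_def)
lemma m5: "meq (rev P @ [l,i]) (rev P @ [k,h])"
  using relstep'[of k h l i "rev P" "[]"] by (simp add: rels_def)
lemma m6: "meq (rev P @ [k,f]) (rev P @ [j,e])"
  using relstep'[of j e k f "rev P" "[]"] by (simp add: rels_def)
lemma m7: "meq (rev P @ [l,g]) (rev P @ [j,e])"
proof -
  have 1: "meq (rev P @ [j,e]) (rev P @ [k,f])"
    using relstep[of j e k f "rev P" "[]"] by (simp add: rels_def)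
  have 2: "meq (rev P @ [k,f]) (rev P @ [l,g])"
    using relstep[of k f l g "rev P" "[]"] by (simp add: rels_def)
  show ?thesis using 1 2 meq.trans meq.sym by blast
qed
lemma m8: "meq (rev P @ [l,i,c]) (rev P @ [j,d,a])"
proof -
  have s1: "meq (rev P @ [l,i,c]) (rev P @ [l,g,b])"
    using relstep'[of g b i c "rev P @ [l]" "[]"] by (simp add: rels_def)
  have s2: "meq (rev P @ [l,g,b]) (rev P @ [j,e,b])"
    using m7[of P] meq_cong[of "rev P @ [l,g]" "rev P @ [j,e]" "[]" "[b]"] by simp
  have s3: "meq (rev P @ [j,e,b]) (rev P @ [j,d,a])"
    using relstep'[of d a e b "rev P @ [j]" "[]"] by (simp add: rels_def)
  show ?thesis using s1 s2 s3 meq.trans by blast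
qed

lemma n0: "meq (rev N @ [y]) (rev (y#N))" by (simp add: meq.refl)
lemma n1: "meq (rev (e#P) @ [b]) (rev (a#d#P))" using m1[of P] by simp
lemma n2: "meq (rev (h#k#P) @ [c]) (rev (a#d#j#P))" using m2[of P] by simp
lemma n3: "meq (rev (h#P) @ [c]) (rev (b#f#P))" using m3[of P] by simp
lemma n4: "meq (rev (i#P) @ [c]) (rev (b#g#P))" using m4[of P] by simp
lemma n5: "meq (rev (l#P) @ [i]) (rev (h#k#P))" using m5[of P] by simp
lemma n6: "meq (rev (k#P) @ [f]) (rev (e#j#P))" using m6[of P] by simp
lemma n7: "meq (rev (l#P) @ [g]) (rev (e#j#P))" using m7[of P] by simp
lemma n8: "meq (rev (i#l#P) @ [c]) (rev (a#d#j#P))" using m8[of P] by simp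
lemmas ns = n0 n1 n2 n3 n4 n5 n6 n7 n8

lemma insr_meq: "meq (rev N @ [y]) (rev (insr y N))"
proof (cases y)
  case b then show ?thesis
    apply (cases N rule: insb.cases) apply (simp_all only: insr_def gen.case insb.simps) apply (rule ns)+ done
next
  case c then show ?thesis
    apply (cases N rule: insc.cases) apply (simp_all only: insr_def gen.case insc.simps) apply (rule ns)+ done
next
  case i then show ?thesis
    apply (cases N rule: insi.cases) apply (simp_all only: insr_def gen.case insi.simps) apply (rule ns)+ done
next
  case f then show ?thesis
    apply (cases N rule: insf.cases) apply (simp_all only: insr_def gen.case insf.simps) apply (rule ns)+ done
next
  case g then show ?thesis
    apply (cases N rule: insg.cases) apply (simp_all only: insr_def gen.case insg.simps) apply (rule ns)+ done
qed (simp_all only: insr_def gen.case n0)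

lemma nf_meq: "meq w (rev (nfr (rev w)))"
proof (induction w rule: rev_induct)
  case Nil then show ?case by (simp add: meq.refl)
next
  case (snoc y w)
  have "meq (w@[y]) (rev (nfr (rev w)) @ [y])"
    using meq_cong[OF snoc, of "[]" "[y]"] by simp
  moreover have "meq (rev (nfr (rev w)) @ [y]) (rev (insr y (nfr (rev w))))"
    using insr_meq[of "nfr (rev w)" y] by simp
  ultimately show ?case using meq.trans by simp
qed

lemma nfr_app: "nfr ys = nfr ys' \<Longrightarrow> nfr (xs @ ys) = nfr (xs @ ys')"
  by (induction xs) auto

lemma two0: "insr b (insr f N) = insr c (insr h N)"
  by (cases N rule: insf.cases) (simp_all add: insr_def)

lemma two1: "insr b (insr g N) = insr c (insr i N)"
  by (cases N rule: insg.cases) (simp_all add: insr_def)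

lemma two: "(u, v) \<in> rels \<Longrightarrow> nfr (rev u @ N) = nfr (rev v @ N)"
  unfolding rels_def using two0 two1 by (auto simp: insr_def)

lemma meq_nfr: "meq u v \<Longrightarrow> nfr (rev u) = nfr (rev v)"
proof (induction rule: meq.induct)
  case (rel u v p q)
  have "nfr (rev u @ rev p) = nfr (rev v @ rev p)" using two[OF rel] .
  then have "nfr (rev q @ (rev u @ rev p)) = nfr (rev q @ (rev v @ rev p))" by (rule nfr_app)
  then show ?case by simp
qed auto

lemma insr_not_il: "insr y N \<noteq> i#l#P"
proof (cases y)
  case c then show ?thesis by (cases N rule: insc.cases) (simp_all add: insr_def)
next
  case i then show ?thesis by (cases N rule: insi.cases) (simp_all add: insr_def)
next
  case b then show ?thesis by (cases N rule: insb.cases) (simp_all add: insr_def)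
next
  case f then show ?thesis by (cases N rule: insf.cases) (simp_all add: insr_def)
next
  case g then show ?thesis by (cases N rule: insg.cases) (simp_all add: insr_def)
qed (simp_all add: insr_def)

lemma nfr_not_il: "nfr w \<noteq> i#l#P"
  by (cases w) (auto simp: insr_not_il)

lemma un_ins: assumes "\<forall>P. N \<noteq> i#l#P" shows "uninsr y (insr y N) = N"
proof (cases y)
  case c then show ?thesis using assms by (cases N rule: insc.cases) (simp_all add: insr_def uninsr_def unb_def unc_def uni_def unf_def ung_def)
next
  case i then show ?thesis by (cases N rule: insi.cases) (simp_all add: insr_def uninsr_def unb_def unc_def uni_def unf_def ung_def)
next
  case b then show ?thesis by (cases N rule: insb.cases) (simp_all add: insr_def uninsr_def unb_def unc_def uni_def unf_def ung_def)
next
  case f then show ?thesis by (cases N rule: insf.cases) (simp_all add: insr_def uninsr_def unb_def unc_def uni_def unf_def ung_def)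
next
  case g then show ?thesis by (cases N rule: insg.cases) (simp_all add: insr_def uninsr_def unb_def unc_def uni_def unf_def ung_def)
qed (simp_all add: insr_def uninsr_def unb_def unc_def uni_def unf_def ung_def)

lemma insr_inj: "insr y N = insr y M \<Longrightarrow> \<forall>P. N \<noteq> i#l#P \<Longrightarrow> \<forall>P. M \<noteq> i#l#P \<Longrightarrow> N = M"
  by (metis un_ins)

lemma cancel: "nfr (xs @ A) = nfr (xs @ B) \<Longrightarrow> nfr A = nfr B"
proof (induction xs)
  case Nil then show ?case by simp
next
  case (Cons y xs)
  then show ?case using insr_inj nfr_not_il by simp
qed

theorem mainTheorem9:
  fixes u v x :: "gen list"
  assumes "meq (u @ x) (v @ x)"
  shows "meq u v"
proof -
  have "nfr (rev x @ rev u) = nfr (rev x @ rev v)" using meq_nfr[OF assms] by simp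
  then have "nfr (rev u) = nfr (rev v)" by (rule cancel)
  then show ?thesis using nf_meq[of u] nf_meq[of v] meq.trans meq.sym by metis
qed

end
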